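(* Assume the setting of the context. Then there is $\epsilon_0>0$ such that for every $\epsilon\in(0,\epsilon_0)$, every $\sigma\in\Sigma$ and every $x\in[0,\infty)$: if $Q^\epsilon_\sigma\cdot x\geq 0$, then $Q^\epsilon_\sigma\cdot x\geq x$.
   Context: Let $(\Sigma,\mathbf{p})$ be a probability space. For each $\sigma\in\Sigma$ and $\epsilon\in[-1,1]$ let real numbers $a_\sigma,b_\sigma$ and $\alpha^\epsilon_\sigma,\beta^\epsilon_\sigma,\gamma^\epsilon_\sigma,\delta^\epsilon_\sigma$ be given, and write $A^\epsilon_\sigma=\begin{pmatrix}\alpha^\epsilon_\sigma&\beta^\epsilon_\sigma\\ \gamma^\epsilon_\sigma&\delta^\epsilon_\sigma\end{pmatrix}$. Assume that for all $\sigma$: $a_\sigma-|b_\sigma|\ge C_1$ and $\|A^\epsilon_\sigma\|\le C_3$ for $|\epsilon|\le1$, with constants $C_1,C_3\in(0,\infty)$. For $x\in\mathbb{R}\cup\{\infty\}$ define the Möbius action $$Q^\epsilon_\sigma\cdot x=\frac{(1+\epsilon^2\alpha^\epsilon_\sigma)x+(a_\sigma-b_\sigma-\epsilon\beta^\epsilon_\sigma)\epsilon}{1+\epsilon^2\delta^\epsilon_\sigma-(a_\sigma+b_\sigma+\epsilon\gamma^\epsilon_\sigma)\epsilon x},$$ i.e. the action of the matrix $\begin{pmatrix}1+\epsilon^2\alpha&(a-b-\epsilon\beta)\epsilon\\-(a+b+\epsilon\gamma)\epsilon&1+\epsilon^2\delta\end{pmatrix}$ on $\mathbb{R}\cup\{\infty\}$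 (with the usual conventions at $\infty$). The energy parameter $\epsilon$ is taken positive. *)

theory Defs
  imports "HOL-Analysis.Analysis" "HOL-Probability.Probability"
begin

definition mat2 :: "real \<Rightarrow> real \<Rightarrow> real \<Rightarrow> real \<Rightarrow> real^2^2" where
  "mat2 m11 m12 m21 m22 = vector [vector [m11, m12], vector [m21, m22]]"

definition mat_norm :: "real^2^2 \<Rightarrow> real" where
  "mat_norm A = onorm (\<lambda>v. A *v v)"

text \<open>Moebius action of the matrix (m11 m12; m21 m22) on a real point x of the
  projective line R \<union> {\<infinity>}: the result is None (= \<infinity>) when the denominator vanishes.\<close>
definition moebius :: "real \<Rightarrow> real \<Rightarrow> real \<Rightarrow> real \<Rightarrow> real \<Rightarrow> real option" where
  "moebius m11 m12 m21 m22 x =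
     (if m21 * x + m22 = 0 then None else Some ((m11 * x + m12) / (m21 * x + m22)))"

definition Q_act :: "real \<Rightarrow> real \<Rightarrow> real \<Rightarrow> real \<Rightarrow> real \<Rightarrow> real \<Rightarrow> real \<Rightarrow> real \<Rightarrow> real option" where
  "Q_act a b \<alpha> \<beta> \<gamma> \<delta> \<epsilon> x =
     moebius (1 + \<epsilon>^2 * \<alpha>) ((a - b - \<epsilon> * \<beta>) * \<epsilon>)
             (- (a + b + \<epsilon> * \<gamma>) * \<epsilon>) (1 + \<epsilon>^2 * \<delta>) x"

end

theory Submission
  imports Defs
begin

lemma entry_le_norm:
  fixes A :: "real^2^2"
  shows "\<bar>A $ i $ j\<bar> \<le> mat_norm A"
proof -
  have "A $ i $ j = (A *v axis j 1) $ i"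
    by (simp add: matrix_vector_mult_basis column_def)
  also have "\<bar>\<dots>\<bar> \<le> norm (A *v axis j 1)" by (rule component_le_norm_cart)
  also have "\<dots> \<le> onorm (\<lambda>v. A *v v) * norm (axis j (1::real) :: real^2)"
    using onorm[of "\<lambda>v. A *v v" "axis j 1"] by simp
  also have "\<dots> = onorm (\<lambda>v. A *v v)" using norm_axis_1[of j] by simp
  finally show ?thesis by (simp add: mat_norm_def)
qed

lemma mat2_entries:
  fixes m11 m12 m21 m22 :: real
  shows "\<bar>m11\<bar> \<le> mat_norm (mat2 m11 m12 m21 m22) \<and> \<bar>m12\<bar> \<le> mat_norm (mat2 m11 m12 m21 m22) \<and>
  \<bar>m21\<bar> \<le> mat_norm (mat2 m11 m12 m21 m22) \<and> \<bar>m22\<bar> \<le> mat_norm (mat2 m11 m12 m21 m22)"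
  using entry_le_norm[of "mat2 m11 m12 m21 m22" 1 1] entry_le_norm[of "mat2 m11 m12 m21 m22" 1 2]
    entry_le_norm[of "mat2 m11 m12 m21 m22" 2 1] entry_le_norm[of "mat2 m11 m12 m21 m22" 2 2]
  by (simp add: mat2_def)

lemma core:
  fixes a b al be ga de e x y C1 C3 :: real
  assumes C1: "C1 > 0" and C3: "C3 > 0" and ab: "a - \<bar>b\<bar> \<ge> C1"
    and bal: "\<bar>al\<bar> \<le> C3" and bbe: "\<bar>be\<bar> \<le> C3" and bga: "\<bar>ga\<bar> \<le> C3" and bde: "\<bar>de\<bar> \<le> C3"
    and e0: "0 < e" and e1: "e < 1" and e2: "e < C1 / (2*C3)" and e3: "e < 1 / C3"
    and x: "x \<ge> 0"
    and q: "Q_act a b al be ga de e x = Some y" and y: "y \<ge> 0"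
  shows "y \<ge> x"
proof -
  define A where "A = 1 + e^2 * al"
  define B where "B = (a - b - e * be) * e"
  define C where "C = (a + b + e * ga) * e"
  define D where "D = 1 + e^2 * de"
  define m where "m = e * (C1 - e * C3)"
  have eC3: "e * C3 < 1" using e3 C3 by (simp add: field_simps)
  have e2': "2 * e * C3 < C1" using e2 C3 by (simp add: field_simps)
  have ee: "e^2 * C3 \<le> e * C3" using e0 e1 C3 by (simp add: power2_eq_square)
  have "\<bar>e^2 * al\<bar> \<le> e^2 * C3" using bal by (simp add: abs_mult mult_left_mono)
  hence A0: "A > 0" unfolding A_def using eC3 ee by linarith
  have "\<bar>e * be\<bar> \<le> e * C3" using bbe e0 by (simp add: abs_mult mult_left_mono)
  hence "a - b - e * be \<ge> C1 - e * C3" using ab by linarith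
  hence Bm: "B \<ge> m" unfolding B_def m_def using e0 by (simp add: mult.commute mult_left_mono)
  have "\<bar>e * ga\<bar> \<le> e * C3" using bga e0 by (simp add: abs_mult mult_left_mono)
  hence "a + b + e * ga \<ge> C1 - e * C3" using ab by linarith
  hence Cm: "C \<ge> m" unfolding C_def m_def using e0 by (simp add: mult.commute mult_left_mono)
  have "C1 - e * C3 > 0" proof -
    have "e * C3 > 0" using e0 C3 by simp
    thus ?thesis using e2' by linarith
  qed
  hence m0: "m > 0" unfolding m_def using e0 by simp
  have "\<bar>e^2 * al - e^2 * de\<bar> \<le> 2 * e^2 * C3"
  proof -
    have "\<bar>al - de\<bar> \<le> 2 * C3" using bal bde by linarith
    hence "e^2 * \<bar>al - de\<bar> \<le> e^2 * (2 * C3)" by (rule mult_left_mono) simp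
    thus ?thesis by (simp add: abs_mult flip: right_diff_distrib)
  qed
  hence AD: "A - D \<ge> - 2 * e * (e * C3)" unfolding A_def D_def by (simp add: power2_eq_square)
  have km: "2 * e * (e * C3) \<le> 2 * m" unfolding m_def using e0 e2' by (simp add: algebra_simps)
  have N: "A * x + B > 0" proof -
    have "A * x \<ge> 0" using A0 x by simp
    thus ?thesis using Bm m0 by linarith
  qed
  have qq: "Q_act a b al be ga de e x = moebius A B (- C) D x"
    unfolding Q_act_def A_def B_def C_def D_def by (simp add: algebra_simps)
  have den: "- C * x + D \<noteq> 0" and yq: "y = (A * x + B) / (- C * x + D)"
    using q unfolding qq moebius_def by (auto split: if_splits)
  have dpos: "- C * x + D > 0"
  proof (rule ccontr)
    assume "\<not> ?thesis"
    hence "- C * x + D < 0" using den by linarith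
    hence "y < 0" using yq N by (simp add: divide_pos_neg)
    thus False using y by simp
  qed
  have "m * (x^2 + 1) \<ge> 2 * m * x"
  proof -
    have "m * (x^2 + 1) - 2 * m * x = m * (x - 1)^2" by (simp add: algebra_simps power2_eq_square)
    also have "\<dots> \<ge> 0" using m0 by simp
    finally show ?thesis by simp
  qed
  moreover have "C * x^2 + B \<ge> m * (x^2 + 1)"
    using Cm Bm by (simp add: algebra_simps add_mono mult_right_mono)
  moreover have "(A - D) * x \<ge> - 2 * m * x"
    proof -
    have "A - D \<ge> - 2 * m" using AD km by linarith
    thus ?thesis using x mult_right_mono[of "- 2 * m" "A - D" x] by simp
  qed
  ultimately have "C * x^2 + (A - D) * x + B \<ge> 0" by linarith
  hence "x * (- C * x + D) \<le> A * x + B" by (simp add: algebra_simps power2_eq_square)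
  thus ?thesis using yq dpos by (simp add: le_divide_eq)
qed

theorem lemma1:
  fixes p :: "'s measure"
    and a b :: "'s \<Rightarrow> real"
    and \<alpha> \<beta> \<gamma> \<delta> :: "real \<Rightarrow> 's \<Rightarrow> real"
    and C1 C3 :: real
  assumes "prob_space p"
    and "C1 > 0" and "C3 > 0"
    and "\<And>\<sigma>. \<sigma> \<in> space p \<Longrightarrow> a \<sigma> - \<bar>b \<sigma>\<bar> \<ge> C1"
    and "\<And>\<sigma> \<epsilon>. \<sigma> \<in> space p \<Longrightarrow> \<bar>\<epsilon>\<bar> \<le> 1 \<Longrightarrow>
           mat_norm (mat2 (\<alpha> \<epsilon> \<sigma>) (\<beta> \<epsilon> \<sigma>) (\<gamma> \<epsilon> \<sigma>) (\<delta> \<epsilon> \<sigma>)) \<le> C3"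
  shows "\<exists>\<epsilon>0 > 0. \<forall>\<epsilon> \<in> {0<..<\<epsilon>0}. \<forall>\<sigma> \<in> space p. \<forall>x \<ge> 0. \<forall>y.
           Q_act (a \<sigma>) (b \<sigma>) (\<alpha> \<epsilon> \<sigma>) (\<beta> \<epsilon> \<sigma>) (\<gamma> \<epsilon> \<sigma>) (\<delta> \<epsilon> \<sigma>) \<epsilon> x = Some y
           \<longrightarrow> y \<ge> 0 \<longrightarrow> y \<ge> x"
proof (rule exI[of _ "min 1 (min (C1 / (2*C3)) (1 / C3))"], intro conjI ballI allI impI)
  show "0 < min 1 (min (C1 / (2*C3)) (1 / C3))" using assms(2,3) by simp
next
  fix e \<sigma> x y
  assume e: "e \<in> {0<..<min 1 (min (C1 / (2*C3)) (1 / C3))}" and s: "\<sigma> \<in> space p"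
    and x: "0 \<le> x" and q: "Q_act (a \<sigma>) (b \<sigma>) (\<alpha> e \<sigma>) (\<beta> e \<sigma>) (\<gamma> e \<sigma>) (\<delta> e \<sigma>) e x = Some y"
    and y: "0 \<le> y"
  have n: "mat_norm (mat2 (\<alpha> e \<sigma>) (\<beta> e \<sigma>) (\<gamma> e \<sigma>) (\<delta> e \<sigma>)) \<le> C3"
    using assms(5)[OF s] e by simp
  note M = mat2_entries[of "\<alpha> e \<sigma>" "\<beta> e \<sigma>" "\<gamma> e \<sigma>" "\<delta> e \<sigma>"]
  have b1: "\<bar>\<alpha> e \<sigma>\<bar> \<le> C3" using M n by linarith
  have b2: "\<bar>\<beta> e \<sigma>\<bar> \<le> C3" using M n by linarith
  have b3: "\<bar>\<gamma> e \<sigma>\<bar> \<le> C3" using M n by linarith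
  have b4: "\<bar>\<delta> e \<sigma>\<bar> \<le> C3" using M n by linarith
  have e1: "0 < e" "e < 1" "e < C1 / (2*C3)" "e < 1 / C3" using e by auto
  show "x \<le> y"
    by (rule core[OF assms(2,3) assms(4)[OF s] b1 b2 b3 b4 e1 x q y])
qed

end
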